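(* Let $\Phi$ be a Markov Logic Network with largest formula arity $d$, let $n,m$ be positive integers, and let $\omega$ be an interpretation on $[n+m]$. Then $$w(\omega) \leq w(\omega \downarrow [n]) \times w(\omega \downarrow [\bar{n}]) \times \prod_{k \in [d]} (w^{max}_{k})^{ \binom{n+m}{k} - \binom{n}{k} - \binom{m}{k}}$$ and $$w(\omega) \geq w(\omega \downarrow [n]) \times w(\omega \downarrow [\bar{n}]) \times \prod_{k \in [d]} (w^{min}_{k})^{ \binom{n+m}{k} - \binom{n}{k} - \binom{m}{k}},$$ where $[\bar n]=\{n+1,\dots,n+m\}$.
   Context: Fix a finite function-free relational first-order signature $\mathcal{R}$. For a positive integer $N$ write $[N]=\{1,\dots,N\}$. For a finite set $D$ of constants, a ground atom over $D$ is $R(a_1,\dots,a_r)$ with $R\in\mathcal{R}$ of arity $r$ and $a_1,\dots,a_r\in D$. An interpretation on $D$ is a map assigning true/false to every ground atom over $D$; $\Omega^{(N)}$ is the set of interpretations on $[N]$. For an interpretation $\omega$ on $D$ and $I\subseteq D$, $\omega\downarrow I$ is the interpretation on $I$ obtained by restricting $\omega$ to the ground atoms all of whose arguments lie in $I$. A Markov Logic Network (MLN) $\Phi$ is a finite set of pairs $(\phi_i,a_i)$, where $\phi_i$ is a function-free, quantifier-free first-order formula over $\mathcal{R}$ and $a_i\in\mathbb{R}$. The arity of $\phi_i$ is the number of distinct variables in it; $\Phi_k$ is the set of pairs whose formula has arity $k$. Convention: a formula with $k$ variables is grounded only by substituting $k$ pairwise distinct constants for its variables; for an interpretation $\omega$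 on a finite set $D$, $N(\phi,\omega)$ is the number of injective assignments of the variables of $\phi$ to elements of $D$ under which $\phi$ is true in $\omega$. The weight of an interpretation $\omega$ on any finite domain is $w(\omega)=\exp\bigl(\sum_{(\phi_i,a_i)\in\Phi}a_iN(\phi_i,\omega)\bigr)$, and its $k$-weight is $w_k(\omega)=\exp\bigl(\sum_{(\phi_i,a_i)\in\Phi_k}a_iN(\phi_i,\omega)\bigr)$. $w_k^{max}$ and $w_k^{min}$ denote the maximum and minimum of $w_k(\omega')$ over all interpretations $\omega'$ on a $k$-element domain (e.g. on $[k]$). Binomial coefficients $\binom{a}{k}$ with $k>a$ are $0$. *)

theory Defs
  imports Complex_Main "HOL-Library.FuncSet"
begin

text \<open>Signature: relation symbols form a finite type 'r, with arity function ar.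
  Constants are natural numbers. Quantifier-free, function-free formulas with
  variables of type 'v.\<close>

datatype ('r, 'v) qf =
    Tru
  | Atom 'r "'v list"
  | Eq 'v 'v
  | Neg "('r, 'v) qf"
  | Conj "('r, 'v) qf" "('r, 'v) qf"
  | Disj "('r, 'v) qf" "('r, 'v) qf"

primrec fvars :: "('r, 'v) qf \<Rightarrow> 'v set" where
  "fvars Tru = {}"
| "fvars (Atom R vs) = set vs"
| "fvars (Eq x y) = {x, y}"
| "fvars (Neg p) = fvars p"
| "fvars (Conj p q) = fvars p \<union> fvars q"
| "fvars (Disj p q) = fvars p \<union> fvars q"

text \<open>An interpretation is a truth assignment to ground atoms R(a1..ar); we
  represent it as a predicate that is False on everything that is not a ground
  atom over D (so interpretations on D correspond exactly to such predicates).\<close>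

type_synonym 'r interp = "'r \<Rightarrow> nat list \<Rightarrow> bool"

definition interps :: "('r \<Rightarrow> nat) \<Rightarrow> nat set \<Rightarrow> 'r interp set" where
  "interps ar D = {\<omega>. \<forall>R as. \<omega> R as \<longrightarrow> length as = ar R \<and> set as \<subseteq> D}"

definition restr :: "'r interp \<Rightarrow> nat set \<Rightarrow> 'r interp" where
  "restr \<omega> I = (\<lambda>R as. \<omega> R as \<and> set as \<subseteq> I)"

primrec holds :: "'r interp \<Rightarrow> ('v \<Rightarrow> nat) \<Rightarrow> ('r, 'v) qf \<Rightarrow> bool" where
  "holds \<omega> \<sigma> Tru = True"
| "holds \<omega> \<sigma> (Atom R vs) = \<omega> R (map \<sigma> vs)"
| "holds \<omega> \<sigma> (Eq x y) = (\<sigma> x = \<sigma> y)"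
| "holds \<omega> \<sigma> (Neg p) = (\<not> holds \<omega> \<sigma> p)"
| "holds \<omega> \<sigma> (Conj p q) = (holds \<omega> \<sigma> p \<and> holds \<omega> \<sigma> q)"
| "holds \<omega> \<sigma> (Disj p q) = (holds \<omega> \<sigma> p \<or> holds \<omega> \<sigma> q)"

definition ngr :: "('r, 'v) qf \<Rightarrow> nat set \<Rightarrow> 'r interp \<Rightarrow> nat" where
  "ngr \<phi> D \<omega> = card {\<sigma> \<in> fvars \<phi> \<rightarrow>\<^sub>E D. inj_on \<sigma> (fvars \<phi>) \<and> holds \<omega> \<sigma> \<phi>}"

type_synonym ('r, 'v) mln = "(('r, 'v) qf \<times> real) set"

definition farity :: "('r, 'v) qf \<Rightarrow> nat" where
  "farity \<phi> = card (fvars \<phi>)"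

definition max_arity :: "('r, 'v) mln \<Rightarrow> nat" where
  "max_arity \<Phi> = Max (insert 0 ((\<lambda>(\<phi>, a). farity \<phi>) ` \<Phi>))"

definition weight :: "('r, 'v) mln \<Rightarrow> nat set \<Rightarrow> 'r interp \<Rightarrow> real" where
  "weight \<Phi> D \<omega> = exp (\<Sum>(\<phi>, a)\<in>\<Phi>. a * real (ngr \<phi> D \<omega>))"

definition kweight :: "('r, 'v) mln \<Rightarrow> nat \<Rightarrow> nat set \<Rightarrow> 'r interp \<Rightarrow> real" where
  "kweight \<Phi> k D \<omega> = exp (\<Sum>(\<phi>, a)\<in>{p \<in> \<Phi>. farity (fst p) = k}. a * real (ngr \<phi> D \<omega>))"

definition wmax :: "('r \<Rightarrow> nat) \<Rightarrow> ('r, 'v) mln \<Rightarrow> nat \<Rightarrow> real" where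
  "wmax ar \<Phi> k = Max (kweight \<Phi> k {1..k} ` interps ar {1..k})"

definition wmin :: "('r \<Rightarrow> nat) \<Rightarrow> ('r, 'v) mln \<Rightarrow> nat \<Rightarrow> real" where
  "wmin ar \<Phi> k = Min (kweight \<Phi> k {1..k} ` interps ar {1..k})"

end

theory Submission
  imports Defs
begin

lemma fvars_finite[simp]: "finite (fvars \<phi>)" by (induction \<phi>) auto

lemma holds_restr: "\<sigma> ` fvars \<phi> \<subseteq> S \<Longrightarrow> holds (restr \<omega> S) \<sigma> \<phi> = holds \<omega> \<sigma> \<phi>"
  by (induction \<phi>) (auto simp: restr_def)

lemma holds_cong: "(\<forall>x\<in>fvars \<phi>. \<sigma> x = \<tau> x) \<Longrightarrow> holds \<omega> \<sigma> \<phi> = holds \<omega> \<tau> \<phi>"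
proof (induction \<phi>)
  case (Atom R vs)
  then have "map \<sigma> vs = map \<tau> vs" by (auto intro: map_cong)
  then show ?case by (simp only: holds.simps)
qed auto

lemma holds_map:
  assumes "inj_on h S" "\<sigma> ` fvars \<phi> \<subseteq> S" "\<And>R as. set as \<subseteq> S \<Longrightarrow> \<omega>2 R (map h as) = \<omega>1 R as"
  shows "holds \<omega>2 (h \<circ> \<sigma>) \<phi> = holds \<omega>1 \<sigma> \<phi>"
  using assms(2)
proof (induction \<phi>)
  case (Atom R vs)
  then have "set (map \<sigma> vs) \<subseteq> S" by auto
  from assms(3)[OF this] show ?case by (simp add: comp_def)
next
  case (Eq x y)
  then show ?case using assms(1) by (auto simp: inj_on_eq_iff)
qed auto

lemma ngr_bij:
  assumes bij: "bij_betw h S T"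
  shows "ngr \<phi> S \<omega>1 = ngr \<phi> T (\<lambda>R as. set as \<subseteq> T \<and> \<omega>1 R (map (inv_into S h) as))"
proof -
  define F where "F = fvars \<phi>"
  define h' where "h' = inv_into S h"
  define \<omega>2 where "\<omega>2 = (\<lambda>R as. set as \<subseteq> T \<and> \<omega>1 R (map h' as))"
  have inj: "inj_on h S" and img: "h ` S = T" using bij by (auto simp: bij_betw_def)
  have hh: "\<And>x. x \<in> S \<Longrightarrow> h' (h x) = x" unfolding h'_def using inj by simp
  have hh2: "h (h' y) = y" if "y \<in> T" for y
    unfolding h'_def by (rule f_inv_into_f) (use that img in simp)
  have h'S: "h' y \<in> S" if "y \<in> T" for y
    unfolding h'_def by (rule inv_into_into) (use that img in simp)
  have key: "holds \<omega>2 (restrict (h \<circ> \<sigma>) F) \<phi> = holds \<omega>1 \<sigma> \<phi>" if "\<sigma> ` F \<subseteq> S" for \<sigma>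
  proof -
    have "holds \<omega>2 (restrict (h \<circ> \<sigma>) F) \<phi> = holds \<omega>2 (h \<circ> \<sigma>) \<phi>"
      by (rule holds_cong) (simp add: F_def)
    also have "\<dots> = holds \<omega>1 \<sigma> \<phi>"
    proof (rule holds_map[OF inj])
      show "\<sigma> ` fvars \<phi> \<subseteq> S" using that F_def by simp
      fix R as assume as: "set as \<subseteq> S"
      have m: "map h' (map h as) = as" using as hh by (induction as) auto
      have st: "set (map h as) \<subseteq> T" using as img by auto
      show "\<omega>2 R (map h as) = \<omega>1 R as" unfolding \<omega>2_def using st m by (simp only: simp_thms)
    qed
    finally show ?thesis .
  qed
  define A where "A = {\<sigma> \<in> F \<rightarrow>\<^sub>E S. inj_on \<sigma> F \<and> holds \<omega>1 \<sigma> \<phi>}"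
  define B where "B = {\<sigma> \<in> F \<rightarrow>\<^sub>E T. inj_on \<sigma> F \<and> holds \<omega>2 \<sigma> \<phi>}"
  have l: "restrict (h' \<circ> restrict (h \<circ> \<sigma>) F) F = \<sigma>" if "\<sigma> \<in> A" for \<sigma>
  proof
    fix x
    have s: "\<sigma> \<in> F \<rightarrow>\<^sub>E S" using that unfolding A_def by simp
    show "restrict (h' \<circ> restrict (h \<circ> \<sigma>) F) F x = \<sigma> x"
    proof (cases "x \<in> F")
      case True
      then have "\<sigma> x \<in> S" by (rule PiE_mem[OF s])
      then show ?thesis using True hh[OF \<open>\<sigma> x \<in> S\<close>] by simp
    next
      case False
      then show ?thesis using PiE_arb[OF s False] by simp
    qed
  qed
  have r: "restrict (h \<circ> restrict (h' \<circ> \<tau>) F) F = \<tau>" if "\<tau> \<in> B" for \<tau>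
  proof
    fix x
    have s: "\<tau> \<in> F \<rightarrow>\<^sub>E T" using that unfolding B_def by simp
    show "restrict (h \<circ> restrict (h' \<circ> \<tau>) F) F x = \<tau> x"
    proof (cases "x \<in> F")
      case True
      then have "\<tau> x \<in> T" by (rule PiE_mem[OF s])
      then show ?thesis using True hh2[OF \<open>\<tau> x \<in> T\<close>] by simp
    next
      case False
      then show ?thesis using PiE_arb[OF s False] by simp
    qed
  qed
  have "bij_betw (\<lambda>\<sigma>. restrict (h \<circ> \<sigma>) F) A B"
  proof (rule bij_betw_byWitness[where f' = "\<lambda>\<tau>. restrict (h' \<circ> \<tau>) F"])
    show "\<forall>a\<in>A. restrict (h' \<circ> restrict (h \<circ> a) F) F = a" using l by blast
    show "\<forall>a\<in>B. restrict (h \<circ> restrict (h' \<circ> a) F) F = a" using r by blast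
    show "(\<lambda>\<sigma>. restrict (h \<circ> \<sigma>) F) ` A \<subseteq> B"
    proof
      fix \<tau> assume "\<tau> \<in> (\<lambda>\<sigma>. restrict (h \<circ> \<sigma>) F) ` A"
      then obtain \<sigma> where s: "\<sigma> \<in> A" and t: "\<tau> = restrict (h \<circ> \<sigma>) F" by blast
      have sPi: "\<sigma> \<in> F \<rightarrow>\<^sub>E S" and si: "inj_on \<sigma> F" and sh: "holds \<omega>1 \<sigma> \<phi>"
        using s unfolding A_def by simp_all
      have sF: "\<sigma> ` F \<subseteq> S" using sPi by (auto dest: PiE_mem)
      have "inj_on (h \<circ> \<sigma>) F" by (rule comp_inj_on[OF si inj_on_subset[OF inj sF]])
      moreover have "inj_on \<tau> F = inj_on (h \<circ> \<sigma>) F" unfolding t by (rule inj_on_cong) simp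
      ultimately have "inj_on \<tau> F" by simp
      moreover have "\<tau> \<in> F \<rightarrow>\<^sub>E T" unfolding t PiE_iff
      proof
        show "\<forall>i\<in>F. restrict (h \<circ> \<sigma>) F i \<in> T" using sF img by auto
      qed simp
      moreover have "holds \<omega>2 \<tau> \<phi>" using key[OF sF] sh unfolding t by simp
      ultimately show "\<tau> \<in> B" unfolding B_def by simp
    qed
    show "(\<lambda>\<tau>. restrict (h' \<circ> \<tau>) F) ` B \<subseteq> A"
    proof
      fix \<sigma> assume "\<sigma> \<in> (\<lambda>\<tau>. restrict (h' \<circ> \<tau>) F) ` B"
      then obtain \<tau> where s: "\<tau> \<in> B" and t: "\<sigma> = restrict (h' \<circ> \<tau>) F" by blast
      have tPi: "\<tau> \<in> F \<rightarrow>\<^sub>E T" and ti: "inj_on \<tau> F" and th: "holds \<omega>2 \<tau> \<phi>"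
        using s unfolding B_def by simp_all
      have tF: "\<tau> ` F \<subseteq> T" using tPi by (auto dest: PiE_mem)
      have sF: "\<sigma> ` F \<subseteq> S" using tF h'S unfolding t by auto
      have injh': "inj_on h' T" by (rule inj_onI) (metis hh2)
      have "inj_on (h' \<circ> \<tau>) F" by (rule comp_inj_on[OF ti inj_on_subset[OF injh' tF]])
      moreover have "inj_on \<sigma> F = inj_on (h' \<circ> \<tau>) F" unfolding t by (rule inj_on_cong) simp
      ultimately have "inj_on \<sigma> F" by simp
      moreover have "\<sigma> \<in> F \<rightarrow>\<^sub>E S" unfolding t PiE_iff
      proof
        show "\<forall>i\<in>F. restrict (h' \<circ> \<tau>) F i \<in> S" using tF h'S by auto
      qed simp
      moreover have "holds \<omega>1 \<sigma> \<phi>"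
      proof -
        have "holds \<omega>2 (restrict (h \<circ> \<sigma>) F) \<phi> = holds \<omega>1 \<sigma> \<phi>" by (rule key[OF sF])
        moreover have "restrict (h \<circ> \<sigma>) F = \<tau>" unfolding t by (rule r[OF s])
        ultimately show ?thesis using th by simp
      qed
      ultimately show "\<sigma> \<in> A" unfolding A_def by simp
    qed
  qed
  then have "card A = card B" by (rule bij_betw_same_card)
  then show ?thesis unfolding ngr_def A_def B_def F_def \<omega>2_def h'_def .
qed

lemma restr_restr: "S \<subseteq> N \<Longrightarrow> restr (restr \<omega> N) S = restr \<omega> S"
  by (auto simp: restr_def fun_eq_iff)

lemma ngr_decomp:
  assumes "finite D"
  shows "ngr \<phi> D \<omega> = (\<Sum>S\<in>{S. S \<subseteq> D \<and> card S = farity \<phi>}. ngr \<phi> S (restr \<omega> S))"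
proof -
  define F where "F = fvars \<phi>"
  define I where "I = {S. S \<subseteq> D \<and> card S = card F}"
  define Aof where "Aof S = {\<sigma> \<in> F \<rightarrow>\<^sub>E S. inj_on \<sigma> F \<and> holds (restr \<omega> S) \<sigma> \<phi>}" for S
  have finF: "finite F" unfolding F_def by simp
  have fin: "finite I" unfolding I_def
    by (rule finite_subset[where B = "Pow D"]) (use assms in auto)
  have imgS: "\<sigma> ` F = S" if "\<sigma> \<in> Aof S" "S \<in> I" for \<sigma> S
  proof -
    have "\<sigma> ` F \<subseteq> S" using that unfolding Aof_def by auto
    moreover have "card (\<sigma> ` F) = card S" using that unfolding Aof_def I_def by (simp add: card_image)
    moreover have "finite S" using that assms unfolding I_def by (auto intro: finite_subset)
    ultimately show ?thesis by (metis card_subset_eq)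
  qed
  have eq: "{\<sigma> \<in> F \<rightarrow>\<^sub>E D. inj_on \<sigma> F \<and> holds \<omega> \<sigma> \<phi>} = (\<Union>S\<in>I. Aof S)"
  proof
    show "{\<sigma> \<in> F \<rightarrow>\<^sub>E D. inj_on \<sigma> F \<and> holds \<omega> \<sigma> \<phi>} \<subseteq> (\<Union>S\<in>I. Aof S)"
    proof
      fix \<sigma> assume s: "\<sigma> \<in> {\<sigma> \<in> F \<rightarrow>\<^sub>E D. inj_on \<sigma> F \<and> holds \<omega> \<sigma> \<phi>}"
      have "\<sigma> ` F \<in> I" using s unfolding I_def by (auto simp: card_image)
      moreover have "\<sigma> \<in> Aof (\<sigma> ` F)" using s holds_restr[of \<sigma> \<phi> "\<sigma> ` F" \<omega>]
        unfolding Aof_def F_def by (auto simp: PiE_def)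
      ultimately show "\<sigma> \<in> (\<Union>S\<in>I. Aof S)" by blast
    qed
    show "(\<Union>S\<in>I. Aof S) \<subseteq> {\<sigma> \<in> F \<rightarrow>\<^sub>E D. inj_on \<sigma> F \<and> holds \<omega> \<sigma> \<phi>}"
    proof
      fix \<sigma> assume "\<sigma> \<in> (\<Union>S\<in>I. Aof S)"
      then obtain S where S: "S \<in> I" "\<sigma> \<in> Aof S" by blast
      have "\<sigma> ` F \<subseteq> S" using S unfolding Aof_def by auto
      then have "holds \<omega> \<sigma> \<phi>" using S holds_restr[of \<sigma> \<phi> S \<omega>] unfolding Aof_def F_def by auto
      moreover have "\<sigma> \<in> F \<rightarrow>\<^sub>E D" using S unfolding Aof_def I_def by (auto simp: PiE_def)
      ultimately show "\<sigma> \<in> {\<sigma> \<in> F \<rightarrow>\<^sub>E D. inj_on \<sigma> F \<and> holds \<omega> \<sigma> \<phi>}" using S unfolding Aof_def by auto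
    qed
  qed
  have "card (\<Union>S\<in>I. Aof S) = (\<Sum>S\<in>I. card (Aof S))"
  proof (rule card_UN_disjoint[OF fin])
    show "\<forall>S\<in>I. finite (Aof S)"
    proof
      fix S assume "S \<in> I"
      then have "finite S" using assms unfolding I_def by (auto intro: finite_subset)
      then have "finite (F \<rightarrow>\<^sub>E S)" using finF by (intro finite_PiE) auto
      then show "finite (Aof S)" unfolding Aof_def by (rule rev_finite_subset) auto
    qed
    show "\<forall>i\<in>I. \<forall>j\<in>I. i \<noteq> j \<longrightarrow> Aof i \<inter> Aof j = {}"
      using imgS by blast
  qed
  then show ?thesis unfolding ngr_def farity_def F_def[symmetric] eq
    by (simp add: I_def Aof_def F_def)
qed

lemma finite_interps:
  fixes ar :: "'r::finite \<Rightarrow> nat"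
  assumes "finite D"
  shows "finite (interps ar D)"
proof -
  define X where "X = {(R, as). length as = ar R \<and> set as \<subseteq> D}"
  have "X \<subseteq> (UNIV :: 'r set) \<times> (\<Union>R. {as. set as \<subseteq> D \<and> length as = ar R})" unfolding X_def by auto
  moreover have "finite ((UNIV :: 'r set) \<times> (\<Union>R. {as. set as \<subseteq> D \<and> length as = ar R}))"
  proof (rule finite_SigmaI)
    show "finite (UNIV :: 'r set)" by simp
    have "finite {as. set as \<subseteq> D \<and> length as = ar R}" for R
      using assms by (rule finite_lists_length_eq)
    then show "finite (\<Union>R. {as. set as \<subseteq> D \<and> length as = ar R})"
      by (intro finite_UN_I) simp_all
  qed
  ultimately have fX: "finite X" by (rule finite_subset)
  have "interps ar D \<subseteq> (\<lambda>Y R as. (R, as) \<in> Y) ` Pow X"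
  proof
    fix \<omega> assume w: "\<omega> \<in> interps ar D"
    have "\<omega> = (\<lambda>R as. (R, as) \<in> {(R, as). \<omega> R as})" by simp
    moreover have "{(R, as). \<omega> R as} \<in> Pow X" using w unfolding interps_def X_def by auto
    ultimately show "\<omega> \<in> (\<lambda>Y R as. (R, as) \<in> Y) ` Pow X" by blast
  qed
  then show ?thesis using fX by (metis finite_Pow_iff finite_imageI finite_subset)
qed

lemma kweight_in:
  fixes ar :: "'r::finite \<Rightarrow> nat"
  assumes "\<omega> \<in> interps ar D" "finite S" "card S = k"
  shows "kweight \<Phi> k S (restr \<omega> S) \<in> kweight \<Phi> k {1..k} ` interps ar {1..k}"
proof -
  obtain h where h: "bij_betw h S {1..k}"
    using finite_same_card_bij[OF assms(2), of "{1..k}"] assms(3) by auto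
  define \<omega>2 where "\<omega>2 = (\<lambda>R as. set as \<subseteq> {1..k} \<and> restr \<omega> S R (map (inv_into S h) as))"
  have "\<omega>2 \<in> interps ar {1..k}"
    unfolding interps_def
  proof (intro CollectI allI impI)
    fix R as assume a: "\<omega>2 R as"
    then have "\<omega> R (map (inv_into S h) as)" unfolding \<omega>2_def restr_def by simp
    then have "length (map (inv_into S h) as) = ar R" using assms(1) unfolding interps_def by blast
    then show "length as = ar R \<and> set as \<subseteq> {1..k}" using a unfolding \<omega>2_def by simp
  qed
  moreover have "kweight \<Phi> k S (restr \<omega> S) = kweight \<Phi> k {1..k} \<omega>2"
    unfolding kweight_def \<omega>2_def ngr_bij[OF h, of _ "restr \<omega> S"] ..
  ultimately show ?thesis by blast
qed

lemma farity_le_max: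
  assumes "finite \<Phi>" "p \<in> \<Phi>"
  shows "farity (fst p) \<le> max_arity \<Phi>"
proof -
  have "farity (fst p) = (\<lambda>(\<phi>, a). farity \<phi>) p" by (simp add: split_def)
  then show ?thesis unfolding max_arity_def using assms
    by (metis (no_types, lifting) Max_ge finite_imageI finite_insert image_eqI insertI2)
qed

lemma sum_decomp:
  fixes \<Phi> :: "('r, 'v) mln"
  assumes "finite \<Phi>" "\<forall>(\<phi>, a)\<in>\<Phi>. farity \<phi> \<ge> 1" "finite D"
  shows "(\<Sum>(\<phi>, a)\<in>\<Phi>. a * real (ngr \<phi> D \<omega>)) =
    (\<Sum>k\<in>{1..max_arity \<Phi>}. \<Sum>S\<in>{S. S \<subseteq> D \<and> card S = k}.
        \<Sum>(\<phi>, a)\<in>{p \<in> \<Phi>. farity (fst p) = k}. a * real (ngr \<phi> S (restr \<omega> S)))"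
proof -
  define f where "f (p :: ('r, 'v) qf \<times> real) S = snd p * real (ngr (fst p) S (restr \<omega> S))" for p S
  have "(\<Sum>(\<phi>, a)\<in>\<Phi>. a * real (ngr \<phi> D \<omega>)) =
      (\<Sum>p\<in>\<Phi>. \<Sum>S\<in>{S. S \<subseteq> D \<and> card S = farity (fst p)}. f p S)"
    unfolding split_def f_def
    by (intro sum.cong refl) (simp add: ngr_decomp[OF assms(3)] sum_distrib_left)
  also have "\<dots> = (\<Sum>k\<in>{1..max_arity \<Phi>}. \<Sum>p\<in>{p \<in> \<Phi>. farity (fst p) = k}.
        \<Sum>S\<in>{S. S \<subseteq> D \<and> card S = farity (fst p)}. f p S)"
  proof (rule sum.group[symmetric])
    show "finite \<Phi>" by fact
    show "finite {1..max_arity \<Phi>}" by simp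
    show "(\<lambda>p. farity (fst p)) ` \<Phi> \<subseteq> {1..max_arity \<Phi>}"
      using assms(2) farity_le_max[OF assms(1)] by fastforce
  qed
  also have "\<dots> = (\<Sum>k\<in>{1..max_arity \<Phi>}. \<Sum>p\<in>{p \<in> \<Phi>. farity (fst p) = k}.
        \<Sum>S\<in>{S. S \<subseteq> D \<and> card S = k}. f p S)"
    by (intro sum.cong refl) auto
  also have "\<dots> = (\<Sum>k\<in>{1..max_arity \<Phi>}. \<Sum>S\<in>{S. S \<subseteq> D \<and> card S = k}.
        \<Sum>p\<in>{p \<in> \<Phi>. farity (fst p) = k}. f p S)"
    by (intro sum.cong refl sum.swap)
  finally show ?thesis unfolding f_def split_def .
qed

theorem proposition1:
  fixes ar :: "'r::finite \<Rightarrow> nat"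
    and \<Phi> :: "('r, 'v) mln"
    and n m :: nat
    and \<omega> :: "'r interp"
  assumes "finite \<Phi>"
    and "\<forall>(\<phi>, a)\<in>\<Phi>. farity \<phi> \<ge> 1"
    and "n > 0" and "m > 0"
    and "\<omega> \<in> interps ar {1..n+m}"
  shows "(weight \<Phi> {1..n+m} \<omega> \<le>
           weight \<Phi> {1..n} (restr \<omega> {1..n}) * weight \<Phi> {n+1..n+m} (restr \<omega> {n+1..n+m}) *
           (\<Prod>k\<in>{1..max_arity \<Phi>}. wmax ar \<Phi> k ^ ((n+m choose k) - (n choose k) - (m choose k)))) \<and>
         (weight \<Phi> {1..n+m} \<omega> \<ge>
           weight \<Phi> {1..n} (restr \<omega> {1..n}) * weight \<Phi> {n+1..n+m} (restr \<omega> {n+1..n+m}) *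
           (\<Prod>k\<in>{1..max_arity \<Phi>}. wmin ar \<Phi> k ^ ((n+m choose k) - (n choose k) - (m choose k))))"
proof -
  define d where "d = max_arity \<Phi>"
  define K where "K = {1..d}"
  define Sub where "Sub D k = {S. S \<subseteq> D \<and> card S = k}" for D :: "nat set" and k :: nat
  define g where "g k S = (\<Sum>(\<phi>, a)\<in>{p \<in> \<Phi>. farity (fst p) = k}. a * real (ngr \<phi> S (restr \<omega> S)))" for k S
  define N where "N = {1..n}"
  define M where "M = {n+1..n+m}"
  define A where "A = {1..n+m}"
  define Mix where "Mix k = Sub A k - Sub N k - Sub M k" for k
  have finA: "finite A" and finN: "finite N" and finM: "finite M"
    unfolding A_def N_def M_def by auto
  have wA: "weight \<Phi> A \<omega> = exp (\<Sum>k\<in>K. \<Sum>S\<in>Sub A k. g k S)"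
    unfolding weight_def sum_decomp[OF assms(1,2) finA] K_def d_def Sub_def g_def ..
  have wN: "weight \<Phi> N (restr \<omega> N) = exp (\<Sum>k\<in>K. \<Sum>S\<in>Sub N k. g k S)"
    unfolding weight_def sum_decomp[OF assms(1,2) finN] K_def d_def Sub_def g_def
    by (intro arg_cong[where f = exp] sum.cong refl) (auto simp: restr_restr)
  have wM: "weight \<Phi> M (restr \<omega> M) = exp (\<Sum>k\<in>K. \<Sum>S\<in>Sub M k. g k S)"
    unfolding weight_def sum_decomp[OF assms(1,2) finM] K_def d_def Sub_def g_def
    by (intro arg_cong[where f = exp] sum.cong refl) (auto simp: restr_restr)
  have finSub: "finite (Sub D k)" if "finite D" for D k
    unfolding Sub_def by (rule finite_subset[where B = "Pow D"]) (use that in auto)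
  have subs: "Sub N k \<subseteq> Sub A k" "Sub M k \<subseteq> Sub A k" for k
    unfolding Sub_def N_def M_def A_def by auto
  have disj: "Sub N k \<inter> Sub M k = {}" if "k \<in> K" for k
  proof -
    have "k \<ge> 1" using that K_def by auto
    { fix S assume "S \<in> Sub N k" "S \<in> Sub M k"
      then have "S \<subseteq> N \<inter> M" "card S = k" unfolding Sub_def by auto
      moreover have "N \<inter> M = {}" unfolding N_def M_def by auto
      ultimately have False using \<open>k \<ge> 1\<close> by auto }
    then show ?thesis by blast
  qed
  have split: "(\<Sum>S\<in>Sub A k. g k S) = (\<Sum>S\<in>Sub N k. g k S) + (\<Sum>S\<in>Sub M k. g k S) + (\<Sum>S\<in>Mix k. g k S)"
    if "k \<in> K" for k
  proof -
    have e: "Sub A k = (Sub N k \<union> Sub M k) \<union> Mix k" using subs[of k] unfolding Mix_def by auto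
    have "(\<Sum>S\<in>Sub A k. g k S) = (\<Sum>S\<in>Sub N k \<union> Sub M k. g k S) + (\<Sum>S\<in>Mix k. g k S)"
      unfolding e
      by (rule sum.union_disjoint) (use finSub[OF finN] finSub[OF finM] finSub[OF finA] in \<open>auto simp: Mix_def\<close>)
    also have "(\<Sum>S\<in>Sub N k \<union> Sub M k. g k S) = (\<Sum>S\<in>Sub N k. g k S) + (\<Sum>S\<in>Sub M k. g k S)"
      by (rule sum.union_disjoint) (use finSub[OF finN] finSub[OF finM] disj[OF that] in auto)
    finally show ?thesis .
  qed
  have cardMix: "card (Mix k) = (n+m choose k) - (n choose k) - (m choose k)" if "k \<in> K" for k
  proof -
    have "card (Mix k) = card (Sub A k - Sub N k) - card (Sub M k)"
      unfolding Mix_def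
      by (rule card_Diff_subset) (use finSub[OF finM] subs[of k] disj[OF that] in auto)
    also have "card (Sub A k - Sub N k) = card (Sub A k) - card (Sub N k)"
      by (rule card_Diff_subset) (use finSub[OF finN] subs[of k] in auto)
    finally show ?thesis unfolding Sub_def
      using n_subsets[OF finA, of k] n_subsets[OF finN, of k] n_subsets[OF finM, of k]
      by (simp add: A_def N_def M_def)
  qed
  have kw: "exp (g k S) = kweight \<Phi> k S (restr \<omega> S)" for k S
    unfolding kweight_def g_def ..
  have fint: "finite (kweight \<Phi> k {1..k} ` interps ar {1..k})" for k
    by (intro finite_imageI finite_interps) simp
  have bnd: "wmin ar \<Phi> k \<le> exp (g k S) \<and> exp (g k S) \<le> wmax ar \<Phi> k" if "S \<in> Mix k" for k S
  proof -
    have "S \<subseteq> A" "card S = k" using that unfolding Mix_def Sub_def by auto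
    then have "finite S" using finA by (auto intro: finite_subset)
    have "kweight \<Phi> k S (restr \<omega> S) \<in> kweight \<Phi> k {1..k} ` interps ar {1..k}"
      using kweight_in[OF assms(5) \<open>finite S\<close> \<open>card S = k\<close>] unfolding A_def .
    then show ?thesis unfolding kw wmin_def wmax_def using fint by auto
  qed
  have wmin_pos: "wmin ar \<Phi> k \<ge> 0" for k
  proof -
    have "(\<lambda>_ _. False) \<in> interps ar {1..k}" by (simp add: interps_def)
    then have "wmin ar \<Phi> k \<in> kweight \<Phi> k {1..k} ` interps ar {1..k}"
      unfolding wmin_def using fint by (intro Min_in) auto
    then show ?thesis by (auto simp: kweight_def)
  qed
  have eqw: "weight \<Phi> A \<omega> = weight \<Phi> N (restr \<omega> N) * weight \<Phi> M (restr \<omega> M) *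
      (\<Prod>k\<in>K. \<Prod>S\<in>Mix k. exp (g k S))"
  proof -
    have "weight \<Phi> A \<omega> = exp (\<Sum>k\<in>K. (\<Sum>S\<in>Sub N k. g k S) + (\<Sum>S\<in>Sub M k. g k S) + (\<Sum>S\<in>Mix k. g k S))"
      unfolding wA by (intro arg_cong[where f = exp] sum.cong refl split)
    also have "\<dots> = weight \<Phi> N (restr \<omega> N) * weight \<Phi> M (restr \<omega> M) * (\<Prod>k\<in>K. exp (\<Sum>S\<in>Mix k. g k S))"
      unfolding wN wM sum.distrib exp_add K_def by (simp add: exp_sum)
    also have "(\<Prod>k\<in>K. exp (\<Sum>S\<in>Mix k. g k S)) = (\<Prod>k\<in>K. \<Prod>S\<in>Mix k. exp (g k S))"
      by (intro prod.cong refl exp_sum) (simp add: Mix_def finSub[OF finA])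
    finally show ?thesis .
  qed
  have up: "(\<Prod>k\<in>K. \<Prod>S\<in>Mix k. exp (g k S)) \<le> (\<Prod>k\<in>K. wmax ar \<Phi> k ^ card (Mix k))"
  proof (rule prod_mono, rule conjI)
    fix k assume "k \<in> K"
    show "0 \<le> (\<Prod>S\<in>Mix k. exp (g k S))" by (simp add: prod_nonneg)
    have "(\<Prod>S\<in>Mix k. exp (g k S)) \<le> (\<Prod>S\<in>Mix k. wmax ar \<Phi> k)"
      using bnd by (intro prod_mono) auto
    then show "(\<Prod>S\<in>Mix k. exp (g k S)) \<le> wmax ar \<Phi> k ^ card (Mix k)" by simp
  qed
  have lo: "(\<Prod>k\<in>K. wmin ar \<Phi> k ^ card (Mix k)) \<le> (\<Prod>k\<in>K. \<Prod>S\<in>Mix k. exp (g k S))"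
  proof (rule prod_mono, rule conjI)
    fix k assume "k \<in> K"
    show "0 \<le> wmin ar \<Phi> k ^ card (Mix k)" using wmin_pos by simp
    have "(\<Prod>S\<in>Mix k. wmin ar \<Phi> k) \<le> (\<Prod>S\<in>Mix k. exp (g k S))"
      using bnd wmin_pos by (intro prod_mono) auto
    then show "wmin ar \<Phi> k ^ card (Mix k) \<le> (\<Prod>S\<in>Mix k. exp (g k S))" by simp
  qed
  have cM: "(\<Prod>k\<in>K. w k ^ card (Mix k)) = (\<Prod>k\<in>{1..max_arity \<Phi>}. w k ^ ((n+m choose k) - (n choose k) - (m choose k)))"
    for w :: "nat \<Rightarrow> real"
    unfolding K_def d_def[symmetric] by (intro prod.cong refl) (simp add: cardMix K_def)
  have pos: "0 \<le> weight \<Phi> N (restr \<omega> N) * weight \<Phi> M (restr \<omega> M)"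
    by (simp add: weight_def)
  show ?thesis
    using mult_left_mono[OF up pos] mult_left_mono[OF lo pos] eqw
    unfolding cM A_def N_def M_def by simp
qed

end
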